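(* Consider the constrained online prediction problem and the \texttt{BanditQ} policy described in the context, run for a horizon of $T$ rounds with the constant parameter $V_t = V = \Theta(\sqrt{T})$ for all $t \ge 1$. Then for every protected user $i \in \mathcal{P}$ and every round $1 \le t \le T$, the state variable satisfies $Q_i(t) = O(T^{3/4})$, where the constant hidden in the $O(\cdot)$ does not depend on $T$, $t$ or the reward sequence (it may depend on $N$ and on the constant in $V=\Theta(\sqrt{T})$).
   Context: There are $N$ users. On each round $t=1,2,\dots$ an online policy chooses a probability vector $\bm{x}(t)=(x_1(t),\dots,x_N(t))$ in the standard simplex $\Delta_N=\{\bm{x}\in\mathbb{R}^N_{\ge 0}:\sum_i x_i=1\}$; afterwards an adversarially chosen reward vector $\bm{r}(t)=(r_1(t),\dots,r_N(t))\in[0,1]^N$ is revealed (full information), and the policy may use all past reward vectors to choose $\bm{x}(t+1)$. A subset $\mathcal{P}\subseteq[N]$ of protected users is given, with target rates $\lambda_i\in[0,1]$, $i\in\mathcal{P}$, satisfying $\sum_{i\in\mathcal{P}}\lambda_i\le 1$; set $\lambda_i=0$ for $i\notin\mathcal{P}$. The feasible set of stationary actions is $\Omega=\{\bm{x}^*\in\Delta_N : r_i(t)x^*_i\ge\lambda_i \text{ for all } i\in\mathcal{P} \text{ and all rounds } t\}$, which is assumed nonempty. The regret of a policy over $T$ rounds is $\mathrm{Regret}_T=\sup_{\bm{x}^*\in\Omega}\sum_{t=1}^T\sum_{i=1}^N r_i(t)\,(x_i^*-x_i(t))$. The \texttt{BanditQ} policy: for each $i\in\mathcal{P}$ maintain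 $Q_i(0)=0$ and $Q_i(t)=\max\big(0,\,Q_i(t-1)+\lambda_i-r_i(t)x_i(t)\big)$; for $i\notin\mathcal{P}$ set $Q_i(t)=0$ for all $t$. Given a non-negative parameter sequence $(V_t)_{t\ge1}$, define surrogate rewards $r'_i(t)=(Q_i(t-1)+V_t)\,r_i(t)$ for all $i\in[N]$. Starting from an arbitrary $\bm{x}(1)\in\Delta_N$, the policy updates by adaptive online gradient ascent: $\bm{x}(t+1)=\Pi_{\Delta_N}\Big(\bm{x}(t)+\bm{r}'(t)\big/\sqrt{2\sum_{\tau=1}^{t}\|\bm{r}'(\tau)\|_2^2}\Big)$, where $\Pi_{\Delta_N}$ denotes Euclidean projection onto $\Delta_N$. *)

theory Defs
  imports "HOL-Analysis.Analysis"
begin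

text \<open>Users are indexed by a finite type 'n; N = CARD('n).\<close>

definition prob_simplex :: "(real^'n::finite) set" where
  "prob_simplex = {x. (\<forall>i. 0 \<le> x $ i) \<and> (\<Sum>i\<in>UNIV. x $ i) = 1}"

definition feasible_set :: "'n set \<Rightarrow> ('n \<Rightarrow> real) \<Rightarrow> (nat \<Rightarrow> real^'n::finite) \<Rightarrow> (real^'n) set" where
  "feasible_set P lam r =
     {xs \<in> prob_simplex. \<forall>i\<in>P. \<forall>t\<ge>1. r t $ i * xs $ i \<ge> lam i}"

text \<open>State of BanditQ after t rounds: (x(t+1), Q(t), sum_{tau<=t} ||r'(tau)||^2).\<close>
fun banditq_state ::
  "'n set \<Rightarrow> ('n \<Rightarrow> real) \<Rightarrow> real \<Rightarrow> (nat \<Rightarrow> real^'n::finite) \<Rightarrow> real^'n \<Rightarrow> nat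
     \<Rightarrow> (real^'n) \<times> ('n \<Rightarrow> real) \<times> real" where
  "banditq_state P lam V r x1 0 = (x1, (\<lambda>i. 0), 0)"
| "banditq_state P lam V r x1 (Suc t) =
     (let (x, Q, G) = banditq_state P lam V r x1 t;
          rr = r (Suc t);
          r' = (\<chi> i. (Q i + V) * rr $ i);
          G' = G + (norm r')\<^sup>2;
          x' = closest_point prob_simplex (x + (1 / sqrt (2 * G')) *\<^sub>R r');
          Q' = (\<lambda>i. if i \<in> P then max 0 (Q i + lam i - rr $ i * x $ i) else 0)
      in (x', Q', G'))"

definition banditq_x where
  "banditq_x P lam V r x1 t = fst (banditq_state P lam V r x1 (t - 1))"

definition banditq_Q where
  "banditq_Q P lam V r x1 t = fst (snd (banditq_state P lam V r x1 t))"

end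

theory Submission
  imports Defs
begin
lemma simplex_closed: "closed (prob_simplex :: (real^'n::finite) set)"
proof -
  have e: "prob_simplex = {x::real^'n. \<forall>i. 0 \<le> x $ i} \<inter> {x. (\<Sum>i\<in>UNIV. x $ i) = 1}"
    unfolding prob_simplex_def by auto
  moreover have "closed {x::real^'n. \<forall>i. 0 \<le> x $ i}"
    by (intro closed_Collect_all closed_Collect_le continuous_intros)
  moreover have "closed {x::real^'n. (\<Sum>i\<in>UNIV. x $ i) = 1}"
    by (intro closed_Collect_eq continuous_intros)
  ultimately show ?thesis by (metis closed_Int)
qed
lemma simplex_convex: "convex (prob_simplex :: (real^'n::finite) set)"
  unfolding convex_def prob_simplex_def
  by (auto simp: sum.distrib sum_distrib_left[symmetric])
lemma simplex_ne: "(prob_simplex :: (real^'n::finite) set) \<noteq> {}"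
proof -
  obtain j :: 'n where True by auto
  have "((\<chi> i. if i = j then 1 else 0) :: real^'n) \<in> prob_simplex"
    unfolding prob_simplex_def by auto
  thus ?thesis by auto
qed
lemma simplex_le1: "x \<in> prob_simplex \<Longrightarrow> x $ i \<le> (1::real)"
proof -
  assume "x \<in> prob_simplex"
  hence "\<forall>i. 0 \<le> x $ i" "(\<Sum>i\<in>UNIV. x $ i) = 1" unfolding prob_simplex_def by auto
  thus ?thesis by (metis UNIV_I finite member_le_sum)
qed
lemma norm2_vec: "(norm (v::real^'n::finite))\<^sup>2 = (\<Sum>i\<in>UNIV. (v$i)^2)"
  unfolding power2_norm_eq_inner inner_vec_def by (simp add: power2_eq_square)
lemma simplex_diam: assumes "v \<in> prob_simplex" "w \<in> prob_simplex"
  shows "(norm (v - w))\<^sup>2 \<le> 2"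
proof -
  have "(norm (v - w))\<^sup>2 = (\<Sum>i\<in>UNIV. (v$i - w$i)^2)"
    by (simp add: norm2_vec)
  also have "\<dots> \<le> (\<Sum>i\<in>UNIV. v$i + w$i)"
  proof (rule sum_mono)
    fix i
    have h1: "0 \<le> v$i" "0 \<le> w$i" using assms unfolding prob_simplex_def by auto
    have h2: "v$i \<le> 1" "w$i \<le> 1" using assms simplex_le1 by auto
    show "(v$i - w$i)^2 \<le> v$i + w$i"
    proof -
      have "\<bar>v$i - w$i\<bar> \<le> 1" using h1 h2 by auto
      hence "\<bar>v$i - w$i\<bar> * \<bar>v$i - w$i\<bar> \<le> \<bar>v$i - w$i\<bar> * 1"
        by (intro mult_left_mono) auto
      thus ?thesis using h1 h2 by (simp add: power2_eq_square abs_mult_self_eq)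
    qed
  qed
  also have "\<dots> = 2" using assms unfolding prob_simplex_def by (simp add: sum.distrib)
  finally show ?thesis .
qed
lemma norm_add_scale_sq:
  fixes z g :: "'a::real_inner"
  shows "(norm (z + c *\<^sub>R g))\<^sup>2 = (norm z)\<^sup>2 + 2 * c * (z \<bullet> g) + c\<^sup>2 * (norm g)\<^sup>2"
  unfolding power2_norm_eq_inner
  by (simp add: inner_add_left inner_add_right inner_commute algebra_simps power2_eq_square)

lemma step_ineq:
  fixes z g :: "'a::real_inner"
  assumes s: "0 < s" and D: "Dn \<le> (norm (z + (1/s) *\<^sub>R g))\<^sup>2"
  shows "- (g \<bullet> z) \<le> s / 2 * ((norm z)\<^sup>2 - Dn) + (norm g)\<^sup>2 / (2 * s)"
proof -
  have "s / 2 * ((norm z)\<^sup>2 - Dn) \<ge> s / 2 * ((norm z)\<^sup>2 - (norm (z + (1/s) *\<^sub>R g))\<^sup>2)"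
    using s D by (intro mult_left_mono) auto
  also have "s / 2 * ((norm z)\<^sup>2 - (norm (z + (1/s) *\<^sub>R g))\<^sup>2) = - (z \<bullet> g) - (norm g)\<^sup>2 / (2 * s)"
    unfolding norm_add_scale_sq using s by (simp add: field_simps power2_eq_square)
  finally show ?thesis by (simp add: inner_commute)
qed

lemma ogd:
  fixes X g :: "nat \<Rightarrow> real^'n::finite" and Gs :: "nat \<Rightarrow> real" and u :: "real^'n"
  assumes G0: "Gs 0 = 0" and GS: "\<And>t. Gs (Suc t) = Gs t + (norm (g (Suc t)))\<^sup>2"
    and XS: "\<And>t. X (Suc t) = closest_point prob_simplex (X t + (1 / sqrt (2 * Gs (Suc t))) *\<^sub>R g (Suc t))"
    and X0: "X 0 \<in> prob_simplex" and u: "u \<in> prob_simplex"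
  shows "(\<Sum>\<tau>=1..t. g \<tau> \<bullet> (u - X (\<tau> - 1))) + sqrt (2 * Gs t) * (norm (X t - u))\<^sup>2 / 2
           \<le> 2 * sqrt (2 * Gs t)"
proof -
  have Xin: "X t \<in> prob_simplex" for t
    by (induction t) (auto simp: XS X0 simplex_closed simplex_ne closest_point_in_set)
  have Gnn: "0 \<le> Gs t" for t
    by (induction t) (auto simp: G0 GS)
  have Gmono: "Gs t \<le> Gs (Suc t)" for t by (simp add: GS)
  show ?thesis
  proof (induction t)
    case 0
    then show ?case by (simp add: G0)
  next
    case (Suc t)
    define s where "s = sqrt (2 * Gs t)"
    define s' where "s' = sqrt (2 * Gs (Suc t))"
    define D where "D = (norm (X t - u))\<^sup>2"
    define Dn where "Dn = (norm (X (Suc t) - u))\<^sup>2"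
    define a where "a = (norm (g (Suc t)))\<^sup>2"
    define R where "R = (\<Sum>\<tau>=1..t. g \<tau> \<bullet> (u - X (\<tau> - 1)))"
    have IH: "R + s * D / 2 \<le> 2 * s" using Suc unfolding R_def s_def D_def .
    have ss: "0 \<le> s" "s \<le> s'" unfolding s_def s'_def using Gnn Gmono by auto
    have s'sq: "s'^2 = s^2 + 2 * a" unfolding s_def s'_def a_def using Gnn GS[of t]
      by (simp add: algebra_simps)
    have D2: "D \<le> 2" unfolding D_def using simplex_diam Xin u by auto
    have Dnn: "0 \<le> D" unfolding D_def by simp
    have stepi: "g (Suc t) \<bullet> (u - X t) \<le> s' / 2 * (D - Dn) + a / (2 * s')"
    proof (cases "s' = 0")
      case True
      then have "a = 0" using s'sq ss by (smt (verit) a_def zero_le_power2 power2_eq_square)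
      then show ?thesis using True unfolding a_def by simp
    next
      case False
      then have sp: "0 < s'" using ss by auto
      have "dist (X (Suc t)) u \<le> dist (X t + (1 / s') *\<^sub>R g (Suc t)) u"
        using closest_point_lipschitz[OF simplex_convex simplex_closed simplex_ne,
            of "X t + (1 / s') *\<^sub>R g (Suc t)" u]
        by (simp add: XS s'_def closest_point_self[OF u])
      hence "Dn \<le> (norm ((X t - u) + (1/s') *\<^sub>R g (Suc t)))\<^sup>2"
        unfolding Dn_def dist_norm by (simp add: power_mono algebra_simps)
      from step_ineq[OF sp this] show ?thesis unfolding D_def a_def by (simp add: inner_diff_right)
    qed
    have key: "a / (2 * s') \<le> s' - s"
    proof (cases "s' = 0")
      case True thus ?thesis using ss by simp
    next
      case False
      hence sp: "0 < s'" using ss by auto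
      have "a = (s' - s) * (s' + s) / 2" using s'sq by (simp add: algebra_simps power2_eq_square)
      also have "\<dots> \<le> (s' - s) * (2 * s') / 2" using ss by (intro divide_right_mono mult_left_mono) auto
      finally have "a \<le> (s' - s) * s'" by simp
      moreover have "(s' - s) * s' \<le> (s' - s) * (2 * s')" using ss sp by (intro mult_left_mono) auto
      ultimately have "a \<le> (s' - s) * (2 * s')" by linarith
      thus ?thesis using sp by (simp add: divide_simps mult.commute mult.left_commute)
    qed
    have "(\<Sum>\<tau>=1..Suc t. g \<tau> \<bullet> (u - X (\<tau> - 1))) = R + g (Suc t) \<bullet> (u - X t)"
      unfolding R_def by simp
    hence "(\<Sum>\<tau>=1..Suc t. g \<tau> \<bullet> (u - X (\<tau> - 1))) + s' * Dn / 2
            \<le> R + s' / 2 * (D - Dn) + a / (2 * s') + s' * Dn / 2" using stepi by simp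
    also have "\<dots> = (R + s * D / 2) + (s' - s) * D / 2 + a / (2 * s')" by (simp add: field_simps)
    also have "\<dots> \<le> 2 * s + (s' - s) * 2 / 2 + (s' - s)"
      using IH key D2 ss by (intro add_mono mult_left_mono divide_right_mono mult_right_mono) auto
    also have "\<dots> \<le> 2 * s'" using ss by (simp add: field_simps)
    finally show ?case unfolding s'_def Dn_def .
  qed
qed
definition "bX P lam V r x1 t = fst (banditq_state P lam V r x1 t)"
definition "bQ P lam V r x1 t = fst (snd (banditq_state P lam V r x1 t))"
definition "bG P lam V r x1 t = snd (snd (banditq_state P lam V r x1 t))"
definition "bg P lam V r x1 t = (\<chi> i. (bQ P lam V r x1 (t - 1) i + V) * r t $ i)"

lemma b_rec:
  shows "bX P lam V r x1 (Suc t) = closest_point prob_simplex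
           (bX P lam V r x1 t + (1 / sqrt (2 * bG P lam V r x1 (Suc t))) *\<^sub>R bg P lam V r x1 (Suc t))"
    and "bG P lam V r x1 (Suc t) = bG P lam V r x1 t + (norm (bg P lam V r x1 (Suc t)))\<^sup>2"
    and "bQ P lam V r x1 (Suc t) = (\<lambda>i. if i \<in> P then max 0 (bQ P lam V r x1 t i + lam i
            - r (Suc t) $ i * bX P lam V r x1 t $ i) else 0)"
    and "bX P lam V r x1 0 = x1" "bQ P lam V r x1 0 = (\<lambda>i. 0)" "bG P lam V r x1 0 = 0"
proof -
  obtain x Q G where e: "banditq_state P lam V r x1 t = (x, Q, G)" by (metis prod_cases3)
  show "bX P lam V r x1 (Suc t) = closest_point prob_simplex
           (bX P lam V r x1 t + (1 / sqrt (2 * bG P lam V r x1 (Suc t))) *\<^sub>R bg P lam V r x1 (Suc t))"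
    "bG P lam V r x1 (Suc t) = bG P lam V r x1 t + (norm (bg P lam V r x1 (Suc t)))\<^sup>2"
    "bQ P lam V r x1 (Suc t) = (\<lambda>i. if i \<in> P then max 0 (bQ P lam V r x1 t i + lam i
            - r (Suc t) $ i * bX P lam V r x1 t $ i) else 0)"
    unfolding bX_def bG_def bQ_def bg_def by (simp_all add: Let_def case_prod_beta)
  show "bX P lam V r x1 0 = x1" "bQ P lam V r x1 0 = (\<lambda>i. 0)" "bG P lam V r x1 0 = 0"
    by (simp_all add: bX_def bG_def bQ_def)
qed

lemma bQ_props: "0 \<le> bQ P lam V r x1 t i \<and> (i \<notin> P \<longrightarrow> bQ P lam V r x1 t i = 0)"
  by (induction t) (auto simp: b_rec)

lemma bX_in: "x1 \<in> prob_simplex \<Longrightarrow> bX P lam V r x1 t \<in> prob_simplex"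
  by (induction t) (auto simp: b_rec simplex_closed simplex_ne closest_point_in_set)

lemma queue_bound:
  fixes P :: "'n::finite set" and r :: "nat \<Rightarrow> real^'n"
  assumes V: "0 \<le> V" and lam: "\<forall>i\<in>P. 0 \<le> lam i \<and> lam i \<le> 1"
    and rr: "\<forall>t\<ge>1. \<forall>i. 0 \<le> r t $ i \<and> r t $ i \<le> 1"
    and x1: "x1 \<in> prob_simplex" and u: "u \<in> feasible_set P lam r"
  shows "(\<Sum>i\<in>UNIV. (bQ P lam V r x1 t i)\<^sup>2)
           \<le> 4 * sqrt (2 * bG P lam V r x1 t) + (2 * V + real CARD('n)) * real t"
proof -
  let ?X = "bX P lam V r x1" and ?Q = "bQ P lam V r x1" and ?G = "bG P lam V r x1"
    and ?g = "bg P lam V r x1"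
  have uS: "u \<in> prob_simplex" and uf: "\<And>i t. i \<in> P \<Longrightarrow> 1 \<le> t \<Longrightarrow> lam i \<le> r t $ i * u $ i"
    using u unfolding feasible_set_def by auto
  define R where "R t = (\<Sum>\<tau>=1..t. ?g \<tau> \<bullet> (u - ?X (\<tau> - 1)))" for t
  have L: "(\<Sum>i\<in>UNIV. (?Q t i)\<^sup>2) \<le> 2 * R t + (2 * V + real CARD('n)) * real t" for t
  proof (induction t)
    case 0
    then show ?case by (simp add: b_rec R_def)
  next
    case (Suc t)
    let ?r = "r (Suc t)" and ?x = "?X t"
    have r01: "0 \<le> ?r $ i" "?r $ i \<le> 1" for i using rr by auto
    have x01: "0 \<le> ?x $ i" "?x $ i \<le> 1" for i using bX_in[OF x1] simplex_le1[OF bX_in[OF x1]]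
      unfolding prob_simplex_def by auto
    have u01: "0 \<le> u $ i" for i using uS unfolding prob_simplex_def by auto
    have each: "(?Q (Suc t) i)\<^sup>2 \<le> (?Q t i)\<^sup>2 + 2 * (?Q t i * (?r $ i * u $ i - ?r $ i * ?x $ i)) + 1" for i
    proof (cases "i \<in> P")
      case False
      then show ?thesis using bQ_props[of P lam V r x1 t i] by (simp add: b_rec)
    next
      case True
      define q where "q = ?Q t i"
      define y where "y = lam i - ?r $ i * ?x $ i"
      have q0: "0 \<le> q" unfolding q_def using bQ_props[of P lam V r x1 t i] by auto
      have rx: "0 \<le> ?r $ i * ?x $ i" "?r $ i * ?x $ i \<le> 1"
        using r01[of i] x01[of i] by (auto intro: mult_le_one)
      have y1: "y\<^sup>2 \<le> 1" unfolding y_def using lam True rx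
        by (subst abs_square_le_1) auto
      have yle: "y \<le> ?r $ i * u $ i - ?r $ i * ?x $ i" unfolding y_def using uf[OF True] by auto
      have "(?Q (Suc t) i)\<^sup>2 = (max 0 (q + y))\<^sup>2" using True by (simp add: b_rec q_def y_def algebra_simps)
      also have "\<dots> \<le> (q + y)\<^sup>2" by (cases "0 \<le> q + y") (auto simp: max_def)
      also have "\<dots> = q\<^sup>2 + 2 * (q * y) + y\<^sup>2" by (simp add: power2_eq_square algebra_simps)
      also have "\<dots> \<le> q\<^sup>2 + 2 * (q * (?r $ i * u $ i - ?r $ i * ?x $ i)) + 1"
        using q0 yle y1 by (intro add_mono mult_left_mono) auto
      finally show ?thesis unfolding q_def .
    qed
    have gdot: "?g (Suc t) \<bullet> (u - ?x) = (\<Sum>i\<in>UNIV. ?Q t i * (?r $ i * u $ i - ?r $ i * ?x $ i))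
                + V * (\<Sum>i\<in>UNIV. ?r $ i * u $ i - ?r $ i * ?x $ i)"
      by (simp add: bg_def inner_vec_def sum_distrib_left sum.distrib[symmetric] algebra_simps)
    have s1: "(\<Sum>i\<in>UNIV. ?r $ i * ?x $ i) \<le> 1"
    proof -
      have "(\<Sum>i\<in>UNIV. ?r $ i * ?x $ i) \<le> (\<Sum>i\<in>UNIV. ?x $ i)"
        using r01 x01 by (intro sum_mono) (simp add: mult_left_le_one_le)
      also have "\<dots> = 1" using bX_in[OF x1] unfolding prob_simplex_def by auto
      finally show ?thesis .
    qed
    have s0: "0 \<le> (\<Sum>i\<in>UNIV. ?r $ i * u $ i)" using r01 u01 by (intro sum_nonneg) auto
    have vb: "- V * (\<Sum>i\<in>UNIV. ?r $ i * u $ i - ?r $ i * ?x $ i) \<le> V"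
    proof -
      have "(\<Sum>i\<in>UNIV. ?r $ i * u $ i - ?r $ i * ?x $ i) \<ge> -1"
        using s0 s1 by (simp add: sum_subtractf)
      hence "V * (-1) \<le> V * (\<Sum>i\<in>UNIV. ?r $ i * u $ i - ?r $ i * ?x $ i)"
        using V by (rule mult_left_mono)
      thus ?thesis by simp
    qed
    have "(\<Sum>i\<in>UNIV. (?Q (Suc t) i)\<^sup>2) \<le>
          (\<Sum>i\<in>UNIV. (?Q t i)\<^sup>2 + 2 * (?Q t i * (?r $ i * u $ i - ?r $ i * ?x $ i)) + 1)"
      by (intro sum_mono each)
    also have "\<dots> = (\<Sum>i\<in>UNIV. (?Q t i)\<^sup>2) + 2 * (\<Sum>i\<in>UNIV. ?Q t i * (?r $ i * u $ i - ?r $ i * ?x $ i))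
          + real CARD('n)"
      by (simp add: sum.distrib sum_distrib_left)
    also have "\<dots> \<le> 2 * R t + (2 * V + real CARD('n)) * real t
          + 2 * (?g (Suc t) \<bullet> (u - ?x)) + 2 * V + real CARD('n)"
      using Suc.IH gdot vb by linarith
    also have "\<dots> = 2 * R (Suc t) + (2 * V + real CARD('n)) * real (Suc t)"
      by (simp add: R_def algebra_simps)
    finally show ?case .
  qed
  have "R t + sqrt (2 * ?G t) * (norm (?X t - u))\<^sup>2 / 2 \<le> 2 * sqrt (2 * ?G t)"
    unfolding R_def
    by (rule ogd[where Gs = ?G and X = ?X and g = ?g]) (auto simp: b_rec x1 uS)
  moreover have "0 \<le> sqrt (2 * ?G t) * (norm (?X t - u))\<^sup>2 / 2"
  proof -
    have "0 \<le> ?G t" by (induction t) (auto simp: b_rec)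
    thus ?thesis by simp
  qed
  ultimately have "R t \<le> 2 * sqrt (2 * ?G t)" by linarith
  with L[of t] show ?thesis by linarith
qed
lemma G_bound:
  fixes P :: "'n::finite set" and r :: "nat \<Rightarrow> real^'n"
  assumes V: "0 \<le> V" and rr: "\<forall>t\<ge>1. \<forall>i. 0 \<le> r t $ i \<and> r t $ i \<le> 1"
  shows "(\<forall>\<tau><t. \<forall>i. bQ P lam V r x1 \<tau> i \<le> K) \<Longrightarrow>
           bG P lam V r x1 t \<le> real t * real CARD('n) * (K + V)\<^sup>2"
proof (induction t)
  case 0
  then show ?case by (simp add: b_rec)
next
  case (Suc t)
  have IH: "bG P lam V r x1 t \<le> real t * real CARD('n) * (K + V)\<^sup>2" using Suc by auto
  have "(norm (bg P lam V r x1 (Suc t)))\<^sup>2 = (\<Sum>i\<in>UNIV. ((bQ P lam V r x1 t i + V) * r (Suc t) $ i)\<^sup>2)"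
    by (simp add: norm2_vec bg_def)
  also have "\<dots> \<le> (\<Sum>i\<in>(UNIV::'n set). (K + V)\<^sup>2)"
  proof (rule sum_mono)
    fix i
    have q: "0 \<le> bQ P lam V r x1 t i" using bQ_props[of P lam V r x1 t i] by auto
    have qk: "bQ P lam V r x1 t i \<le> K" using Suc.prems by auto
    have r01: "0 \<le> r (Suc t) $ i" "r (Suc t) $ i \<le> 1" using rr by auto
    have "(bQ P lam V r x1 t i + V) * r (Suc t) $ i \<le> (bQ P lam V r x1 t i + V) * 1"
      using q V r01 by (intro mult_left_mono) auto
    also have "\<dots> \<le> K + V" using qk by simp
    finally show "((bQ P lam V r x1 t i + V) * r (Suc t) $ i)\<^sup>2 \<le> (K + V)\<^sup>2"
      using q V r01 by (intro power_mono) auto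
  qed
  also have "\<dots> = real CARD('n) * (K + V)\<^sup>2" by simp
  finally show ?case using IH by (simp add: b_rec algebra_simps)
qed

lemma w_facts:
  fixes T :: nat
  assumes "1 \<le> T"
  defines "w \<equiv> real T powr (1/4)"
  shows "1 \<le> w" "real T = w^4" "sqrt (real T) = w^2" "real T powr (3/4) = w^3"
proof -
  have Tp: "0 < real T" using assms by simp
  show "1 \<le> w" unfolding w_def using assms by (simp add: ge_one_powr_ge_zero)
  have wp: "0 < w" unfolding w_def using Tp by simp
  have wn: "w^n = real T powr (1/4 * real n)" for n
  proof -
    have "w^n = w powr real n" using powr_realpow[OF wp] by simp
    also have "\<dots> = real T powr (1/4 * real n)" unfolding w_def by (simp add: powr_powr)
    finally show ?thesis .
  qed
  show "real T = w^4" using wn[of 4] Tp by simp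
  have "w^2 = real T powr (1/2)" using wn[of 2] by simp
  thus "sqrt (real T) = w^2" by (simp add: powr_half_sqrt Tp)
  have "w^3 = real T powr (1/4 * 3)" using wn[of 3] by simp
  thus "real T powr (3/4) = w^3" by simp
qed
theorem proposition1:
  fixes a b :: real
  assumes "0 < a" and "a \<le> b"
  shows "\<exists>C::real. \<forall>(T::nat) (V::real) (P::'n::finite set) (lam::'n \<Rightarrow> real)
            (r::nat \<Rightarrow> real^'n) (x1::real^'n).
     1 \<le> T \<and> a * sqrt (real T) \<le> V \<and> V \<le> b * sqrt (real T)
     \<and> (\<forall>i\<in>P. 0 \<le> lam i \<and> lam i \<le> 1) \<and> (\<forall>i. i \<notin> P \<longrightarrow> lam i = 0)
     \<and> (\<Sum>i\<in>P. lam i) \<le> 1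
     \<and> (\<forall>t\<ge>1. \<forall>i. 0 \<le> r t $ i \<and> r t $ i \<le> 1)
     \<and> x1 \<in> prob_simplex
     \<and> feasible_set P lam r \<noteq> {}
     \<longrightarrow> (\<forall>i\<in>P. \<forall>t\<in>{1..T}. banditq_Q P lam V r x1 t i \<le> C * real T powr (3/4))"
proof -
  define N where "N = real CARD('n)"
  define A where "A = 4 * sqrt (2 * N)"
  define C where "C = A + A * b + 2 * b + N + 1"
  have b0: "0 < b" using assms by linarith
  have N1: "1 \<le> N" unfolding N_def by simp
  have A0: "0 \<le> A" unfolding A_def N_def by simp
  have C1: "1 \<le> C" unfolding C_def using A0 b0 N1 by (simp add: mult_nonneg_nonneg)
  have Cq: "A * C + A * b + 2 * b + N \<le> C\<^sup>2"
  proof -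
    have "C - A = A * b + 2 * b + N + 1" unfolding C_def by simp
    hence "C\<^sup>2 - A * C = C * (A * b + 2 * b + N + 1)" by (simp add: power2_eq_square algebra_simps)
    also have "\<dots> \<ge> 1 * (A * b + 2 * b + N + 1)"
      using C1 A0 b0 N1 by (intro mult_right_mono) auto
    finally show ?thesis by simp
  qed
  show ?thesis
  proof (rule exI[of _ C], intro allI impI)
    fix T :: nat and V :: real and P :: "'n set" and lam :: "'n \<Rightarrow> real"
      and r :: "nat \<Rightarrow> real^'n" and x1 :: "real^'n"
    assume H: "1 \<le> T \<and> a * sqrt (real T) \<le> V \<and> V \<le> b * sqrt (real T)
     \<and> (\<forall>i\<in>P. 0 \<le> lam i \<and> lam i \<le> 1) \<and> (\<forall>i. i \<notin> P \<longrightarrow> lam i = 0)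
     \<and> (\<Sum>i\<in>P. lam i) \<le> 1
     \<and> (\<forall>t\<ge>1. \<forall>i. 0 \<le> r t $ i \<and> r t $ i \<le> 1)
     \<and> x1 \<in> prob_simplex
     \<and> feasible_set P lam r \<noteq> {}"
    have T1: "1 \<le> T" and Vl: "a * sqrt (real T) \<le> V" and Vu: "V \<le> b * sqrt (real T)"
      and lam: "\<forall>i\<in>P. 0 \<le> lam i \<and> lam i \<le> 1"
      and rr: "\<forall>t\<ge>1. \<forall>i. 0 \<le> r t $ i \<and> r t $ i \<le> 1"
      and x1: "x1 \<in> prob_simplex" and fe: "feasible_set P lam r \<noteq> {}" using H by auto
    obtain u where u: "u \<in> feasible_set P lam r" using fe by auto
    define w where "w = real T powr (1/4)"
    have w1: "1 \<le> w" and wT: "real T = w^4" and wS: "sqrt (real T) = w^2"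
      and wP: "real T powr (3/4) = w^3"
      using w_facts[OF T1] unfolding w_def by auto
    define K where "K = C * w^3"
    have V0: "0 \<le> V" using Vl assms(1) by (smt (verit) mult_nonneg_nonneg real_sqrt_ge_zero of_nat_0_le_iff)
    have Vb: "V \<le> b * w^2" using Vu wS by simp
    have K0: "0 \<le> K" unfolding K_def using C1 w1 by simp
    have w23: "w^2 \<le> w^3" "w^4 \<le> w^6" "w^5 \<le> w^6" using w1 by (auto intro: power_increasing)
    have main: "t \<le> T \<Longrightarrow> \<forall>i. bQ P lam V r x1 t i \<le> K" for t
    proof (induction t rule: less_induct)
      case (less t)
      have IH: "\<forall>\<tau><t. \<forall>i. bQ P lam V r x1 \<tau> i \<le> K" using less by auto
      have G: "bG P lam V r x1 t \<le> real t * N * (K + V)\<^sup>2"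
        using G_bound[OF V0 rr IH] unfolding N_def .
      have tw: "real t \<le> w^4" using less.prems wT by simp
      have "sqrt (2 * bG P lam V r x1 t) \<le> sqrt (2 * (real t * N * (K + V)\<^sup>2))"
        using G by simp
      also have "\<dots> = sqrt (2 * N) * sqrt (real t) * (K + V)"
        using K0 V0 by (simp add: real_sqrt_mult)
      also have "\<dots> \<le> sqrt (2 * N) * w^2 * (K + V)"
      proof -
        have "sqrt (real t) \<le> sqrt (real T)" using less.prems by simp
        thus ?thesis using wS K0 V0 N1 by (intro mult_right_mono mult_left_mono) auto
      qed
      finally have sG: "4 * sqrt (2 * bG P lam V r x1 t) \<le> A * w^2 * (K + V)"
        unfolding A_def by simp
      have "A * w^2 * (K + V) \<le> A * w^2 * ((C + b) * w^3)"
        unfolding K_def using A0 Vb w23 b0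
        by (intro mult_left_mono) (auto simp: algebra_simps intro: order_trans)
      also have "\<dots> = A * (C + b) * w^5" by (simp add: algebra_simps power_add[symmetric])
      also have "\<dots> \<le> A * (C + b) * w^6" using A0 C1 b0 w23 by (intro mult_left_mono) auto
      finally have t1: "A * w^2 * (K + V) \<le> A * (C + b) * w^6" .
      have "(2 * V + N) * real t \<le> (2 * (b * w^2) + N) * w^4"
        using V0 N1 Vb tw by (intro mult_mono) auto
      also have "\<dots> = 2 * b * w^6 + N * w^4" by (simp add: algebra_simps power_add[symmetric])
      also have "\<dots> \<le> 2 * b * w^6 + N * w^6" using N1 w23 by (intro add_left_mono mult_left_mono) auto
      finally have t2: "(2 * V + N) * real t \<le> (2 * b + N) * w^6" by (simp add: algebra_simps)
      have Lb: "(\<Sum>i\<in>UNIV. (bQ P lam V r x1 t i)\<^sup>2) \<le> (A * C + A * b + 2 * b + N) * w^6"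
        using queue_bound[OF V0 lam rr x1 u, of t] sG t1 t2 unfolding N_def
        by (simp add: algebra_simps)
      also have "\<dots> \<le> C\<^sup>2 * w^6" using Cq by (intro mult_right_mono) auto
      also have "\<dots> = K\<^sup>2" unfolding K_def by (simp add: power_mult_distrib power_mult[symmetric])
      finally have LK: "(\<Sum>i\<in>UNIV. (bQ P lam V r x1 t i)\<^sup>2) \<le> K\<^sup>2" .
      show ?case
      proof
        fix i
        have "(bQ P lam V r x1 t i)\<^sup>2 \<le> (\<Sum>i\<in>UNIV. (bQ P lam V r x1 t i)\<^sup>2)"
          by (rule member_le_sum) auto
        hence "(bQ P lam V r x1 t i)\<^sup>2 \<le> K\<^sup>2" using LK by linarith
        thus "bQ P lam V r x1 t i \<le> K" using K0 by (rule power2_le_imp_le)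
      qed
    qed
    show "\<forall>i\<in>P. \<forall>t\<in>{1..T}. banditq_Q P lam V r x1 t i \<le> C * real T powr (3/4)"
      using main unfolding banditq_Q_def bQ_def[symmetric] wP K_def by auto
  qed
qed
end
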